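(* Let $r\in\mathbb{Q}\cap(0,1)$ with numerator $\mathsf{n}(r)\ge 2$ (in lowest terms), let $S_r$ be the additive submonoid of $\mathbb{R}$ generated by $\{r^n : n\in\mathbb{N}_0\}$, and let $E(S_r)$ be the additive submonoid of $\mathbb{R}$ generated by $\{e^s : s\in S_r\}$. Then $E(S_r)$ is a positive semiring that is atomic but does not satisfy ACCP.
   Context: A positive semiring is a subset of $\mathbb{R}_{\ge0}$ containing $0$ and $1$ and closed under the usual addition and multiplication. For a semidomain $S$ (subset of an integral domain containing $0,1$ and closed under $+,\cdot$), $S^*=S\setminus\{0\}$ is a multiplicative monoid; an atom is a nonunit $a\in S^*$ such that $a=bc$ with $b,c\in S^*$ forces $b$ or $c$ to be a unit; $S$ is atomic if every nonunit of $S^*$ is a finite product of atoms; $S$ satisfies ACCP if every ascending chain of principal ideals $b_1S^*\subseteq b_2S^*\subseteq\cdots$ of the monoid $S^*$ eventually stabilizes. *)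

theory Defs
  imports Complex_Main
begin

inductive_set add_submonoid_gen :: "real set \<Rightarrow> real set" for A :: "real set" where
  zero: "0 \<in> add_submonoid_gen A"
| gen: "a \<in> A \<Longrightarrow> a \<in> add_submonoid_gen A"
| add: "x \<in> add_submonoid_gen A \<Longrightarrow> y \<in> add_submonoid_gen A \<Longrightarrow> x + y \<in> add_submonoid_gen A"

definition positive_semiring :: "real set \<Rightarrow> bool" where
  "positive_semiring S \<longleftrightarrow> S \<subseteq> {0..} \<and> 0 \<in> S \<and> 1 \<in> S \<and>
     (\<forall>x\<in>S. \<forall>y\<in>S. x + y \<in> S \<and> x * y \<in> S)"

definition sr_unit :: "real set \<Rightarrow> real \<Rightarrow> bool" where
  "sr_unit S u \<longleftrightarrow> u \<in> S - {0} \<and> (\<exists>v\<in>S - {0}. u * v = 1)"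

definition sr_atom :: "real set \<Rightarrow> real \<Rightarrow> bool" where
  "sr_atom S a \<longleftrightarrow> a \<in> S - {0} \<and> \<not> sr_unit S a \<and>
     (\<forall>b\<in>S - {0}. \<forall>c\<in>S - {0}. a = b * c \<longrightarrow> sr_unit S b \<or> sr_unit S c)"

definition sr_atomic :: "real set \<Rightarrow> bool" where
  "sr_atomic S \<longleftrightarrow> (\<forall>x\<in>S - {0}. \<not> sr_unit S x \<longrightarrow>
     (\<exists>as. as \<noteq> [] \<and> (\<forall>a\<in>set as. sr_atom S a) \<and> x = prod_list as))"

definition sr_principal :: "real set \<Rightarrow> real \<Rightarrow> real set" where
  "sr_principal S b = {b * s | s. s \<in> S - {0}}"

definition sr_ACCP :: "real set \<Rightarrow> bool" where
  "sr_ACCP S \<longleftrightarrow> (\<forall>b :: nat \<Rightarrow> real. (\<forall>n. b n \<in> S - {0}) \<longrightarrow>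
     (\<forall>n. sr_principal S (b n) \<subseteq> sr_principal S (b (Suc n))) \<longrightarrow>
     (\<exists>N. \<forall>n\<ge>N. sr_principal S (b n) = sr_principal S (b N)))"

end

theory Submission
  imports Defs "HOL-Computational_Algebra.Polynomial" "HOL-Computational_Algebra.Primes" "HOL-Library.Multiset"
begin

definition intpoly :: "real poly \<Rightarrow> bool" where "intpoly P \<longleftrightarrow> (\<forall>i. coeff P i \<in> \<int>)"

lemma intpoly_mult: "intpoly P \<Longrightarrow> intpoly Q \<Longrightarrow> intpoly (P * Q)"
  unfolding intpoly_def coeff_mult by (auto intro!: Ints_sum Ints_mult)

lemma intpoly_1: "intpoly 1"
  unfolding intpoly_def by (auto simp: coeff_1)

lemma intpoly_power: "intpoly P \<Longrightarrow> intpoly (P ^ n)"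
  by (induction n) (auto intro: intpoly_mult intpoly_1)

lemma intpoly_prod: "(\<And>i. i \<in> A \<Longrightarrow> intpoly (f i)) \<Longrightarrow> intpoly (\<Prod>i\<in>A. f i)"
  by (induction A rule: infinite_finite_induct) (auto intro: intpoly_mult intpoly_1)

lemma intpoly_lin: "c \<in> \<int> \<Longrightarrow> intpoly [:c, 1:]"
  unfolding intpoly_def by (auto simp: coeff_pCons split: nat.splits)

lemma pcompose_power: "pcompose (P ^ n) Q = (pcompose P Q) ^ n"
  by (induction n) (auto simp: pcompose_mult pcompose_1)

lemma pcompose_lin_shift: "pcompose [:c, 1:] [:k, 1:] = [:c + k, 1::real:]"
  by (simp add: pcompose_pCons)

lemma higher_pderiv_pcompose_shift:
  "(pderiv ^^ j) (pcompose P [:k, 1::real:]) = pcompose ((pderiv ^^ j) P) [:k, 1:]"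
  by (induction j) (auto simp: pderiv_pcompose pderiv_pCons)

lemma higher_pderiv_pcompose_scale:
  "(pderiv ^^ j) (pcompose P [:0, c::real:]) = smult (c ^ j) (pcompose ((pderiv ^^ j) P) [:0, c:])"
  by (induction j) (auto simp: pderiv_pcompose pderiv_pCons pderiv_smult mult.commute)

lemma poly_higher_pderiv_0: "poly ((pderiv ^^ j) (P::real poly)) 0 = fact j * coeff P j"
  by (simp add: poly_0_coeff_0 coeff_higher_pderiv pochhammer_fact)

definition gr :: "nat \<Rightarrow> nat \<Rightarrow> real poly" where
  "gr p m = [:0,1:]^(p-1) * (\<Prod>i\<in>{1..m}. [:-real i,1:]^p)"

lemma coeff_xpow_mult: "coeff ([:0,1:]^n * H) j = (if j < n then 0 else coeff H (j - n))"
  using coeff_monom_mult[of 1 n H j] by (simp add: monom_altdef)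

lemma pcompose_x: "pcompose [:0, 1:] (q::real poly) = q"
  by (simp add: pcompose_pCons)

lemma G_shift: "pcompose (gr p m) [:real k,1:] =
   [:real k,1:]^(p-1) * (\<Prod>i\<in>{1..m}. [:real k - real i,1:]^p)"
proof -
  have "pcompose [:0,1:] [:real k,1:] = [:real k, 1:]" by (simp add: pcompose_x)
  moreover have "pcompose [:-real i,1:] [:real k,1:] = [:real k - real i,1:]" for i
    using pcompose_lin_shift[of "-real i" "real k"] by simp
  ultimately show ?thesis
    unfolding gr_def by (simp add: pcompose_mult pcompose_power pcompose_prod)
qed

lemma Gk_form:
  assumes "1 \<le> k" "k \<le> m"
  shows "\<exists>H. intpoly H \<and> pcompose (gr p m) [:real k,1:] = [:0,1:]^p * H"
proof -
  have k: "k \<in> {1..m}" using assms by auto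
  have "(\<Prod>i\<in>{1..m}. [:real k - real i,1:]^p) =
        [:real k - real k,1:]^p * (\<Prod>i\<in>{1..m}-{k}. [:real k - real i,1:]^p)"
    using prod.remove[OF _ k, of "\<lambda>i. [:real k - real i,1:]^p"] by simp
  then have eq: "pcompose (gr p m) [:real k,1:] = [:0,1:]^p *
     ([:real k,1:]^(p-1) * (\<Prod>i\<in>{1..m}-{k}. [:real k - real i,1:]^p))"
    unfolding G_shift by (simp add: algebra_simps)
  have "intpoly ([:real k,1:]^(p-1) * (\<Prod>i\<in>{1..m}-{k}. [:real k - real i,1:]^p))"
    by (intro intpoly_mult intpoly_power intpoly_prod intpoly_lin) auto
  with eq show ?thesis by blast
qed

lemma fact_div_Ints: "p \<le> j \<Longrightarrow> (fact j / fact p :: real) \<in> \<int>"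
proof -
  assume "p \<le> j"
  then have "fact p dvd (fact j :: nat)" by (rule fact_dvd)
  then obtain d where "fact j = fact p * (d::nat)" by (auto elim: dvdE)
  then have "(fact j :: real) = fact p * real d" by (metis of_nat_fact of_nat_mult)
  then show ?thesis by simp
qed

definition P0 :: "nat \<Rightarrow> nat \<Rightarrow> int" where "P0 p m = (\<Prod>i\<in>{1..m}. (- int i) ^ p)"

lemma V_form:
  assumes "k \<le> m" "p \<ge> 1" "p - 1 < L"
  shows "\<exists>W\<in>\<int>. (\<Sum>j<L. real N ^ j * fact j * coeff (pcompose (gr p m) [:real k,1:]) j)
     = fact (p-1) * ((if k = 0 then real N ^ (p-1) * of_int (P0 p m) else 0) + real p * W)"
proof (cases "k = 0")
  case True
  define H0 where "H0 = (\<Prod>i\<in>{1..m}. [:-real i,1:]^p)"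
  have G0: "pcompose (gr p m) [:real k,1:] = [:0,1:]^(p-1) * H0"
    using True by (simp add: H0_def gr_def)
  have H0i: "intpoly H0" unfolding H0_def
    by (intro intpoly_prod intpoly_power intpoly_lin) auto
  have c0: "coeff H0 0 = of_int (P0 p m)"
    by (simp add: H0_def P0_def poly_0_coeff_0[symmetric] poly_prod)
  define w where "w j = (if j < p then 0 else real N ^ j * (fact j / fact p) * coeff H0 (j - (p-1)))" for j
  have wi: "w j \<in> \<int>" for j
  proof (cases "j < p")
    case False
    have "real N ^ j * (fact j / fact p) * coeff H0 (j - (p-1)) \<in> \<int>"
      using H0i fact_div_Ints[of p j] False unfolding intpoly_def
      by (intro Ints_mult Ints_power) auto
    then show ?thesis using False unfolding w_def by simp
  qed (simp add: w_def)
  have tm: "real N ^ j * fact j * coeff (pcompose (gr p m) [:real k,1:]) j =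
     fact (p-1) * ((if j = p - 1 then real N ^ (p-1) * of_int (P0 p m) else 0) + real p * w j)" for j
  proof -
    consider "j < p - 1" | "j = p - 1" | "j \<ge> p" by linarith
    then show ?thesis
    proof cases
      case 1 then show ?thesis using assms by (simp add: G0 coeff_xpow_mult w_def)
    next
      case 2 then show ?thesis using assms by (simp add: G0 coeff_xpow_mult w_def c0)
    next
      case 3
      have fp: "(fact p :: real) = real p * fact (p-1)"
        using assms(2) by (metis Suc_diff_1 fact_Suc less_le_trans less_numeral_extra(1) of_nat_Suc)
      have "real N ^ j * fact j * coeff H0 (j - (p-1)) =
            fact (p-1) * (real p * (real N ^ j * (fact j / fact p) * coeff H0 (j - (p-1))))"
        using assms(2) by (auto simp: fp)
      moreover have "j \<noteq> p - 1" "\<not> j < p - 1" "\<not> j < p" using 3 assms(2) by auto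
      ultimately show ?thesis by (simp add: G0 coeff_xpow_mult w_def)
    qed
  qed
  have "(\<Sum>j<L. real N ^ j * fact j * coeff (pcompose (gr p m) [:real k,1:]) j) =
      fact (p-1) * ((\<Sum>j<L. (if j = p - 1 then real N ^ (p-1) * of_int (P0 p m) else 0)) + real p * (\<Sum>j<L. w j))"
    unfolding tm by (simp add: sum.distrib flip: sum_distrib_left)
  also have "(\<Sum>j<L. (if j = p - 1 then real N ^ (p-1) * of_int (P0 p m) else 0)) = real N ^ (p-1) * of_int (P0 p m)"
    using assms(3) by (simp add: sum.delta)
  finally show ?thesis using True wi by (intro bexI[of _ "\<Sum>j<L. w j"]) (auto intro!: Ints_sum)
next
  case False
  then have "1 \<le> k" by simp
  from Gk_form[OF this assms(1)] obtain H where Hi: "intpoly H"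
    and G: "pcompose (gr p m) [:real k,1:] = [:0,1:]^p * H" by blast
  define w where "w j = (if j < p then 0 else real N ^ j * (fact j / fact p) * coeff H (j - p))" for j
  have wi: "w j \<in> \<int>" for j
  proof (cases "j < p")
    case False
    have "real N ^ j * (fact j / fact p) * coeff H (j - p) \<in> \<int>"
      using Hi fact_div_Ints[of p j] False unfolding intpoly_def
      by (intro Ints_mult Ints_power) auto
    then show ?thesis using False unfolding w_def by simp
  qed (simp add: w_def)
  have fp: "(fact p :: real) = real p * fact (p-1)"
    using assms(2) by (metis Suc_diff_1 fact_Suc less_le_trans less_numeral_extra(1) of_nat_Suc)
  have tm: "real N ^ j * fact j * coeff (pcompose (gr p m) [:real k,1:]) j =
     fact (p-1) * (real p * w j)" for j
    using assms(2) by (auto simp: G coeff_xpow_mult w_def fp)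
  have "(\<Sum>j<L. real N ^ j * fact j * coeff (pcompose (gr p m) [:real k,1:]) j) =
      fact (p-1) * (real p * (\<Sum>j<L. w j))"
    by (simp add: tm sum_distrib_left)
  then show ?thesis using False wi by (intro bexI[of _ "\<Sum>j<L. w j"]) (auto intro!: Ints_sum)
qed

lemma poly_higher_pderiv_at:
  "poly ((pderiv ^^ j) P) (real k) = fact j * coeff (pcompose P [:real k, 1:]) j"
proof -
  have "poly ((pderiv ^^ j) P) (real k) = poly (pcompose ((pderiv ^^ j) P) [:real k, 1:]) 0"
    by (simp add: poly_pcompose)
  also have "\<dots> = poly ((pderiv ^^ j) (pcompose P [:real k, 1:])) 0"
    by (simp add: higher_pderiv_pcompose_shift)
  finally show ?thesis by (simp add: poly_higher_pderiv_0)
qed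

lemma pderiv_sum': "pderiv (sum g A) = (\<Sum>x\<in>A. pderiv (g x))"
  by (induction A rule: infinite_finite_induct) (auto simp: pderiv_add)

definition hf :: "nat \<Rightarrow> nat \<Rightarrow> nat \<Rightarrow> real poly" where
  "hf N p m = pcompose (gr p m) [:0, real N:]"

definition hF :: "nat \<Rightarrow> nat \<Rightarrow> nat \<Rightarrow> real poly" where
  "hF N p m = (\<Sum>j<degree (hf N p m) + 1. (pderiv ^^ j) (hf N p m))"

lemma hF_val:
  assumes "N > 0"
  shows "poly (hF N p m) (real k / real N) =
    (\<Sum>j<degree (hf N p m) + 1. real N ^ j * fact j * coeff (pcompose (gr p m) [:real k,1:]) j)"
proof -
  have "poly ((pderiv ^^ j) (hf N p m)) (real k / real N) =
        real N ^ j * fact j * coeff (pcompose (gr p m) [:real k,1:]) j" for j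
    using assms by (simp add: hf_def higher_pderiv_pcompose_scale poly_pcompose poly_higher_pderiv_at)
  then show ?thesis by (simp add: hF_def poly_sum)
qed

lemma higher_pderiv_zero:
  assumes "degree P < L" shows "(pderiv ^^ L) (P :: real poly) = 0"
proof (rule poly_eqI)
  fix n
  have "coeff P (n + L) = 0" using assms by (intro coeff_eq_0) simp
  then show "coeff ((pderiv ^^ L) P) n = coeff 0 n" by (simp add: coeff_higher_pderiv)
qed

lemma hF_diff: "hF N p m - pderiv (hF N p m) = hf N p m"
proof -
  let ?f = "hf N p m" and ?L = "degree (hf N p m) + 1"
  have "pderiv (hF N p m) = (\<Sum>j<?L. (pderiv ^^ Suc j) ?f)"
    by (simp only: pderiv_sum' hF_def funpow.simps(2) o_apply)
  then have "hF N p m - pderiv (hF N p m) = - (\<Sum>j<?L. (pderiv ^^ Suc j) ?f - (pderiv ^^ j) ?f)"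
    unfolding hF_def by (simp add: sum_subtractf)
  also have "(\<Sum>j<?L. (pderiv ^^ Suc j) ?f - (pderiv ^^ j) ?f) = (pderiv ^^ ?L) ?f - ?f"
    using sum_lessThan_telescope[of "\<lambda>j. (pderiv ^^ j) ?f" ?L] by simp
  also have "(pderiv ^^ ?L) ?f = 0" by (rule higher_pderiv_zero) simp
  finally show ?thesis by simp
qed

lemma gr_bound:
  assumes "m \<ge> 1" "0 \<le> y" "y \<le> real m"
  shows "\<bar>poly (gr p m) y\<bar> \<le> (real m ^ (m + 1)) ^ p"
proof -
  have "\<bar>poly (gr p m) y\<bar> = \<bar>y\<bar> ^ (p-1) * (\<Prod>i\<in>{1..m}. \<bar>y - real i\<bar> ^ p)"
    by (simp add: gr_def poly_prod abs_prod power_abs abs_mult)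
  also have "\<dots> \<le> real m ^ p * (\<Prod>i\<in>{1..m}. real m ^ p)"
  proof (rule mult_mono)
    have "\<bar>y\<bar> ^ (p-1) \<le> real m ^ (p-1)" using assms by (intro power_mono) auto
    also have "\<dots> \<le> real m ^ p" using assms by (intro power_increasing) auto
    finally show "\<bar>y\<bar> ^ (p-1) \<le> real m ^ p" .
    show "(\<Prod>i\<in>{1..m}. \<bar>y - real i\<bar> ^ p) \<le> (\<Prod>i\<in>{1..m}. real m ^ p)"
      using assms by (intro prod_mono conjI power_mono) auto
  qed (auto intro: prod_nonneg)
  also have "\<dots> = real m ^ p * (real m ^ p) ^ m" by simp
  also have "(real m ^ p) ^ m = (real m ^ m) ^ p"
    by (simp flip: power_mult add: mult.commute)
  also have "real m ^ p * (real m ^ m) ^ p = (real m ^ (m + 1)) ^ p"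
    by (simp add: power_mult_distrib)
  finally show ?thesis .
qed

lemma hF_mvt:
  assumes "N > 0" "m \<ge> 1" "0 < t" "t \<le> real m / real N"
  shows "\<bar>poly (hF N p m) t - exp t * poly (hF N p m) 0\<bar> \<le> t * exp t * (real m ^ (m + 1)) ^ p"
proof -
  define F where "F = hF N p m"
  define phi where "phi x = exp (- x) * poly F x" for x
  have der: "DERIV phi x :> - exp (- x) * poly (hf N p m) x" for x
  proof -
    have "DERIV phi x :> (- exp (- x)) * poly F x + exp (- x) * poly (pderiv F) x"
      unfolding phi_def by (auto intro!: derivative_eq_intros)
    moreover have "poly F x - poly (pderiv F) x = poly (hf N p m) x"
      using hF_diff[of N p m] unfolding F_def by (metis poly_diff)
    ultimately show ?thesis by (simp add: algebra_simps)
  qed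
  obtain z where z: "0 < z" "z < t" "phi t - phi 0 = (t - 0) * (- exp (- z) * poly (hf N p m) z)"
    using MVT2[OF assms(3), of phi "\<lambda>x. - exp (- x) * poly (hf N p m) x"] der by blast
  have "\<bar>poly (hf N p m) z\<bar> \<le> (real m ^ (m + 1)) ^ p"
  proof -
    have "real N * z \<le> real N * (real m / real N)"
      using z assms by (intro mult_left_mono) auto
    then have "real N * z \<le> real m" using assms by simp
    then show ?thesis using gr_bound[of m "real N * z" p] assms z
      by (simp add: hf_def poly_pcompose mult.commute)
  qed
  moreover have "exp (- z) \<le> 1" using z by simp
  ultimately have "exp (- z) * \<bar>poly (hf N p m) z\<bar> \<le> 1 * (real m ^ (m + 1)) ^ p"
    by (intro mult_mono) auto
  then have "\<bar>phi t - phi 0\<bar> \<le> t * (real m ^ (m + 1)) ^ p"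
    using z assms by (simp add: abs_mult mult_left_mono)
  moreover have "poly F t - exp t * poly F 0 = exp t * (phi t - phi 0)"
    by (simp add: phi_def algebra_simps exp_minus field_simps)
  ultimately have "\<bar>poly F t - exp t * poly F 0\<bar> \<le> exp t * (t * (real m ^ (m + 1)) ^ p)"
    by (simp add: abs_mult mult_left_mono)
  then show ?thesis unfolding F_def by (simp add: algebra_simps)
qed

lemma P0_nonzero: "P0 p m \<noteq> 0"
  unfolding P0_def by (auto simp: prod_zero_iff)

lemma degree_gr: "p \<ge> 1 \<Longrightarrow> degree (gr p m) \<ge> p - 1"
proof -
  assume p: "p \<ge> 1"
  have "coeff (gr p m) (p - 1) = coeff (\<Prod>i\<in>{1..m}. [:-real i,1:]^p) 0"
    unfolding gr_def by (simp add: coeff_xpow_mult)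
  also have "\<dots> = of_int (P0 p m)"
    by (simp add: P0_def poly_0_coeff_0[symmetric] poly_prod)
  finally have "coeff (gr p m) (p - 1) \<noteq> 0" using P0_nonzero by simp
  then show ?thesis by (rule le_degree)
qed

lemma degree_hf: "N > 0 \<Longrightarrow> degree (hf N p m) = degree (gr p m)"
  by (simp add: hf_def degree_pcompose)

lemma prime_not_dvd_P0:
  assumes "prime p" "m < p" shows "\<not> int p dvd P0 p m"
proof
  assume "int p dvd P0 p m"
  then obtain i where i: "i \<in> {1..m}" "int p dvd (- int i) ^ p"
    unfolding P0_def using assms(1) by (auto simp: prime_dvd_prod_iff)
  have pi: "prime (int p)" using assms(1) by simp
  have "int p dvd - int i" using prime_dvd_power[OF pi i(2)] .
  then have "int p dvd int i" by simp
  then have "p dvd i" by simp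
  then have "p \<le> i" using i by (auto dest: dvd_imp_le)
  then show False using i assms by auto
qed

theorem exp_lin_indep_core:
  fixes c :: "nat \<Rightarrow> int"
  assumes N: "N > 0" and c0: "c 0 \<noteq> 0"
  shows "(\<Sum>k\<le>m. of_int (c k) * exp (real k / real N)) \<noteq> 0"
proof
  assume S: "(\<Sum>k\<le>m. of_int (c k) * exp (real k / real N)) = 0"
  have m: "m \<ge> 1"
  proof (rule ccontr)
    assume "\<not> m \<ge> 1" then have "m = 0" by simp
    with S c0 show False by simp
  qed
  define C where "C = real m ^ (m + 1)"
  have C0: "C \<ge> 0" unfolding C_def by simp
  define Bc where "Bc = (\<Sum>k\<le>m. \<bar>of_int (c k)\<bar> * (real k / real N) * exp (real k / real N))"
  have Bc0: "Bc \<ge> 0" unfolding Bc_def by (intro sum_nonneg) auto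
  have "(\<lambda>n. C ^ n / fact n) \<longlonglongrightarrow> 0"
    using summable_LIMSEQ_zero [OF summable_exp[of C]] by (auto simp add: inverse_eq_divide)
  then have "(\<lambda>n. (Bc * C + 1) * (C ^ n / fact n)) \<longlonglongrightarrow> (Bc * C + 1) * 0"
    by (intro tendsto_mult tendsto_const)
  then have "eventually (\<lambda>n. (Bc * C + 1) * (C ^ n / fact n) < 1) sequentially"
    by (intro order_tendstoD) auto
  then obtain n0 where n0: "\<And>n. n \<ge> n0 \<Longrightarrow> (Bc * C + 1) * (C ^ n / fact n) < 1"
    by (auto simp: eventually_sequentially)
  obtain p where p: "prime p" "p > n0 + nat \<bar>c 0\<bar> + N + m + 1"
    using bigger_prime by blast
  have p1: "p \<ge> 1" using p by auto
  define F where "F = hF N p m"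
  define L where "L = degree (hf N p m) + 1"
  have pL: "p - 1 < L" unfolding L_def using degree_hf[OF N, of p m] degree_gr[OF p1, of m] by linarith
  have "\<forall>k\<in>{..m}. \<exists>W\<in>\<int>. poly F (real k / real N) =
      fact (p-1) * ((if k = 0 then real N ^ (p-1) * of_int (P0 p m) else 0) + real p * W)"
    unfolding F_def using hF_val[OF N] V_form[OF _ p1 pL] L_def by auto
  then have "\<forall>k\<in>{..m}. \<exists>W. W \<in> \<int> \<and> poly F (real k / real N) =
      fact (p-1) * ((if k = 0 then real N ^ (p-1) * of_int (P0 p m) else 0) + real p * W)"
    by (simp only: Bex_def)
  from bchoice[OF this] obtain W where W0: "\<forall>k\<in>{..m}. W k \<in> \<int> \<and> poly F (real k / real N) =
      fact (p-1) * ((if k = 0 then real N ^ (p-1) * of_int (P0 p m) else 0) + real p * W k)"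
    by blast
  then have W: "\<And>k. k \<in> {..m} \<Longrightarrow> W k \<in> \<int> \<and> poly F (real k / real N) =
      fact (p-1) * ((if k = 0 then real N ^ (p-1) * of_int (P0 p m) else 0) + real p * W k)"
    by blast
  define J where "J = (\<Sum>k\<le>m. of_int (c k) * poly F (real k / real N))"
  have "J = (\<Sum>k\<le>m. of_int (c k) * (fact (p-1) * ((if k = 0 then real N ^ (p-1) * of_int (P0 p m) else 0) + real p * W k)))"
    unfolding J_def using W by (intro sum.cong) auto
  also have "\<dots> = fact (p-1) * ((\<Sum>k\<le>m. of_int (c k) * (if k = 0 then real N ^ (p-1) * of_int (P0 p m) else 0))
       + real p * (\<Sum>k\<le>m. of_int (c k) * W k))"
    by (simp add: algebra_simps sum.distrib sum_distrib_left)
  also have "(\<Sum>k\<le>m. of_int (c k) * (if k = 0 then real N ^ (p-1) * of_int (P0 p m) else 0)) =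
     of_int (c 0) * real N ^ (p-1) * of_int (P0 p m)"
    by (simp add: if_distrib sum.delta cong: if_cong)
  finally have J1: "J = fact (p-1) * (of_int (c 0) * real N ^ (p-1) * of_int (P0 p m) + real p * (\<Sum>k\<le>m. of_int (c k) * W k))" .
  have "(\<Sum>k\<le>m. of_int (c k) * W k) \<in> \<int>" using W by (intro Ints_sum Ints_mult) auto
  then obtain z where z: "(\<Sum>k\<le>m. of_int (c k) * W k) = of_int z" by (auto elim: Ints_cases)
  define Q where "Q = c 0 * int N ^ (p-1) * P0 p m + int p * z"
  have JQ: "J = fact (p-1) * of_int Q" unfolding J1 Q_def z by simp
  have Q0: "Q \<noteq> 0"
  proof
    assume "Q = 0"
    then have "c 0 * int N ^ (p-1) * P0 p m = int p * (- z)"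
      unfolding Q_def by (simp add: algebra_simps eq_neg_iff_add_eq_0)
    then have "int p dvd c 0 * int N ^ (p-1) * P0 p m" by (rule dvdI)
    moreover have pi: "prime (int p)" using p by simp
    ultimately have "int p dvd c 0 \<or> int p dvd int N ^ (p-1) \<or> int p dvd P0 p m"
      by (simp add: prime_dvd_mult_iff)
    moreover have "\<not> int p dvd c 0"
    proof
      assume "int p dvd c 0"
      then have "int p \<le> \<bar>c 0\<bar>" using c0 by (auto dest: dvd_imp_le_int)
      then show False using p by linarith
    qed
    moreover have "\<not> int p dvd int N ^ (p-1)"
    proof
      assume "int p dvd int N ^ (p-1)"
      then have "int p dvd int N" using prime_dvd_power[OF pi] by blast
      then have "p dvd N" by simp
      then have "p \<le> N" using N by (auto dest: dvd_imp_le)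
      then show False using p by linarith
    qed
    moreover have "\<not> int p dvd P0 p m" using prime_not_dvd_P0[OF p(1)] p by auto
    ultimately show False by blast
  qed
  have lower: "\<bar>J\<bar> \<ge> fact (p-1)"
  proof -
    have "\<bar>of_int Q :: real\<bar> \<ge> 1" using Q0 by linarith
    then have "fact (p-1) * 1 \<le> fact (p-1) * \<bar>of_int Q :: real\<bar>"
      by (intro mult_left_mono) auto
    then show ?thesis unfolding JQ by (simp add: abs_mult)
  qed
  have "J = (\<Sum>k\<le>m. of_int (c k) * (poly F (real k / real N) - exp (real k / real N) * poly F 0))"
  proof -
    have "(\<Sum>k\<le>m. of_int (c k) * (poly F (real k / real N) - exp (real k / real N) * poly F 0))
      = J - poly F 0 * (\<Sum>k\<le>m. of_int (c k) * exp (real k / real N))"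
      unfolding J_def by (simp add: algebra_simps sum_subtractf sum_distrib_left)
    then show ?thesis using S by simp
  qed
  also have "\<bar>\<dots>\<bar> \<le> (\<Sum>k\<le>m. \<bar>of_int (c k)\<bar> * ((real k / real N) * exp (real k / real N) * C ^ p))"
  proof -
    have bnd: "\<bar>poly F (real k / real N) - exp (real k / real N) * poly F 0\<bar>
          \<le> (real k / real N) * exp (real k / real N) * C ^ p" if "k \<le> m" for k
    proof (cases "k = 0")
      case True then show ?thesis by simp
    next
      case False
      have "real k / real N \<le> real m / real N" using that N by (simp add: divide_right_mono)
      then show ?thesis unfolding F_def C_def
        using hF_mvt[OF N m, of "real k / real N" p] False N by simp
    qed
    have "\<bar>(\<Sum>k\<le>m. of_int (c k) * (poly F (real k / real N) - exp (real k / real N) * poly F 0))\<bar>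
       \<le> (\<Sum>k\<le>m. \<bar>of_int (c k) * (poly F (real k / real N) - exp (real k / real N) * poly F 0)\<bar>)"
      by (rule sum_abs)
    also have "\<dots> \<le> (\<Sum>k\<le>m. \<bar>of_int (c k)\<bar> * ((real k / real N) * exp (real k / real N) * C ^ p))"
    proof (rule sum_mono)
      fix k assume "k \<in> {..m}"
      then show "\<bar>of_int (c k) * (poly F (real k / real N) - exp (real k / real N) * poly F 0)\<bar>
        \<le> \<bar>of_int (c k)\<bar> * ((real k / real N) * exp (real k / real N) * C ^ p)"
        unfolding abs_mult by (intro mult_left_mono bnd) auto
    qed
    finally show ?thesis .
  qed
  also have "\<dots> = Bc * C ^ p"
    unfolding Bc_def sum_distrib_right by (intro sum.cong) (auto simp: algebra_simps)
  finally have upper: "\<bar>J\<bar> \<le> Bc * C ^ p" .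
  have "(Bc * C + 1) * (C ^ (p-1) / fact (p-1)) < 1" using n0 p by auto
  then have "(Bc * C + 1) * C ^ (p-1) < fact (p-1)" by (simp add: field_simps)
  moreover have "Bc * C ^ p = Bc * C * C ^ (p-1)"
  proof -
    have "C ^ p = C * C ^ (p-1)" using p1 by (cases p) auto
    then show ?thesis by simp
  qed
  moreover have "Bc * C * C ^ (p-1) \<le> (Bc * C + 1) * C ^ (p-1)"
    using C0 by (intro mult_right_mono) auto
  ultimately show False using upper lower by linarith
qed

theorem exp_lin_indep:
  fixes c :: "nat \<Rightarrow> int"
  assumes N: "N > 0" and S: "(\<Sum>k\<le>m. of_int (c k) * exp (real k / real N)) = 0"
  shows "\<forall>k\<le>m. c k = 0"
proof (rule ccontr)
  assume "\<not> (\<forall>k\<le>m. c k = 0)"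
  then obtain k where k: "k \<le> m" "c k \<noteq> 0" by auto
  define j where "j = (LEAST k. c k \<noteq> 0)"
  have cj: "c j \<noteq> 0" unfolding j_def by (rule LeastI[of _ k]) (use k in auto)
  have jk: "j \<le> k" unfolding j_def by (rule Least_le) (use k in auto)
  have below: "i < j \<Longrightarrow> c i = 0" for i unfolding j_def using not_less_Least by blast
  have "(\<Sum>k\<le>m. of_int (c k) * exp (real k / real N)) = (\<Sum>k\<in>{j..m}. of_int (c k) * exp (real k / real N))"
    using below jk k by (intro sum.mono_neutral_right) auto
  also have "{j..m} = {0 + j..(m - j) + j}" using jk k by auto
  also have "(\<Sum>k\<in>\<dots>. of_int (c k) * exp (real k / real N)) =
     (\<Sum>i\<in>{0..m-j}. of_int (c (i + j)) * exp (real (i + j) / real N))"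
    by (rule sum.shift_bounds_cl_nat_ivl)
  also have "\<dots> = exp (real j / real N) * (\<Sum>i\<le>m-j. of_int (c (i + j)) * exp (real i / real N))"
    by (simp add: sum_distrib_left atMost_atLeast0 add_divide_distrib exp_add algebra_simps)
  finally have "(\<Sum>i\<le>m-j. of_int (c (i + j)) * exp (real i / real N)) = 0" using S by simp
  moreover have "(\<Sum>i\<le>m-j. of_int ((\<lambda>i. c (i + j)) i) * exp (real i / real N)) \<noteq> 0"
    by (rule exp_lin_indep_core[OF N]) (use cj in simp)
  ultimately show False by simp
qed

lemma nat_dvd_of_Ints:
  fixes u d :: nat
  assumes "d > 0" "real u / real d \<in> \<int>"
  shows "d dvd u"
proof -
  obtain z where z: "real u / real d = of_int z" using assms(2) by (auto elim: Ints_cases)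
  then have "real u = real d * of_int z" using assms(1) by (simp add: field_simps)
  then have "int u = int d * z" by (metis of_int_eq_iff of_int_mult of_int_of_nat_eq)
  then show ?thesis
    by (metis dvd_triv_left int_dvd_int_iff)
qed

lemma sum_list_Ints: "(\<And>x. x \<in> set xs \<Longrightarrow> f x \<in> \<int>) \<Longrightarrow> (\<Sum>x\<leftarrow>xs. f x) \<in> \<int>"
  by (induction xs) auto

locale srsetup =
  fixes a b :: nat
  assumes a2: "2 \<le> a" and ab: "a < b" and cop: "coprime a b"
begin

definition r :: real where "r = real a / real b"
definition Smon where "Smon = add_submonoid_gen (range (\<lambda>n::nat. r ^ n))"

lemma b_pos: "b > 0" using a2 ab by simp
lemma r_pos: "0 < r" using a2 ab unfolding r_def by simp
lemma r_lt1: "r < 1" using a2 ab unfolding r_def by simp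

lemma Smon_zero: "0 \<in> Smon" unfolding Smon_def by (rule add_submonoid_gen.zero)
lemma Smon_pow: "r ^ n \<in> Smon" unfolding Smon_def by (rule add_submonoid_gen.gen) auto
lemma Smon_add: "x \<in> Smon \<Longrightarrow> y \<in> Smon \<Longrightarrow> x + y \<in> Smon"
  unfolding Smon_def by (rule add_submonoid_gen.add)

lemma Smon_nonneg: "x \<in> Smon \<Longrightarrow> 0 \<le> x"
  unfolding Smon_def by (induction rule: add_submonoid_gen.induct) (use r_pos in auto)

lemma Smon_nat_mult: "x \<in> Smon \<Longrightarrow> real k * x \<in> Smon"
  by (induction k) (auto simp: Smon_zero algebra_simps intro: Smon_add)

lemma Smon_sum: "(\<And>i. i \<in> I \<Longrightarrow> f i \<in> Smon) \<Longrightarrow> sum f I \<in> Smon"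
  by (induction I rule: infinite_finite_induct) (auto simp: Smon_zero intro: Smon_add)

lemma crep_Sr: "(\<Sum>i\<le>M. real (c i) * r ^ i) \<in> Smon"
  by (intro Smon_sum Smon_nat_mult Smon_pow)

lemma Smon_crep: "x \<in> Smon \<Longrightarrow> \<exists>M c. x = (\<Sum>i\<le>M. real (c i) * r ^ i)"
proof -
  assume "x \<in> Smon"
  then have "\<exists>M c. (\<forall>i>M. c i = 0) \<and> x = (\<Sum>i\<le>M. real (c i) * r ^ i)"
    unfolding Smon_def
  proof (induction rule: add_submonoid_gen.induct)
    case zero
    show ?case by (rule exI[of _ 0], rule exI[of _ "\<lambda>_. 0"]) simp
  next
    case (gen x)
    then obtain n where x: "x = r ^ n" by auto
    have "(\<Sum>i\<le>n. real (if i = n then 1 else 0) * r ^ i) = (\<Sum>i\<le>n. if i = n then r ^ i else 0)"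
      by (intro sum.cong) auto
    also have "\<dots> = r ^ n" by (simp add: sum.delta)
    finally show ?case
      by (intro exI[of _ n] exI[of _ "\<lambda>i. if i = n then 1 else 0"]) (auto simp: x)
  next
    case (add x y)
    then obtain M1 c1 M2 c2 where 1: "\<forall>i>M1. c1 i = 0" "x = (\<Sum>i\<le>M1. real (c1 i) * r ^ i)"
      and 2: "\<forall>i>M2. c2 i = 0" "y = (\<Sum>i\<le>M2. real (c2 i) * r ^ i)" by blast
    define M where "M = max M1 M2"
    have e1: "x = (\<Sum>i\<le>M. real (c1 i) * r ^ i)"
      unfolding 1 M_def using 1(1) by (intro sum.mono_neutral_left) auto
    have e2: "y = (\<Sum>i\<le>M. real (c2 i) * r ^ i)"
      unfolding 2 M_def using 2(1) by (intro sum.mono_neutral_left) auto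
    show ?case
      by (rule exI[of _ M], rule exI[of _ "\<lambda>i. c1 i + c2 i"])
         (use 1 2 in \<open>auto simp: e1 e2 M_def algebra_simps sum.distrib\<close>)
  qed
  then show ?thesis by blast
qed

lemma rpow_mult_b: "i \<le> n \<Longrightarrow> r ^ i * real b ^ n = real (a ^ i * b ^ (n - i))"
proof -
  assume "i \<le> n"
  then have "real b ^ n = real b ^ i * real b ^ (n - i)" by (simp flip: power_add)
  then show ?thesis using b_pos by (simp add: r_def power_divide)
qed

lemma crep_Ints: "M \<le> n \<Longrightarrow> (\<Sum>i\<le>M. real (c i) * r ^ i) * real b ^ n \<in> \<int>"
proof -
  assume "M \<le> n"
  then have eq: "(\<Sum>i\<le>M. real (c i) * r ^ i) * real b ^ n = (\<Sum>i\<le>M. real (c i * a ^ i * b ^ (n - i)))"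
    by (simp add: sum_distrib_right mult.assoc rpow_mult_b)
  show ?thesis unfolding eq by (intro Ints_sum Ints_of_nat)
qed

lemma Smon_Ints: "x \<in> Smon \<Longrightarrow> \<exists>n. x * real b ^ n \<in> \<int>"
  using Smon_crep crep_Ints by blast

lemma top_term: "real e * r ^ Suc m * real b ^ m = real (e * a ^ Suc m) / real b"
proof -
  have "r ^ Suc m * real b ^ Suc m = real (a ^ Suc m)" using rpow_mult_b[of "Suc m" "Suc m"] by simp
  then have "r ^ Suc m * real b ^ m = real (a ^ Suc m) / real b" using b_pos
    by (simp add: field_simps)
  then show ?thesis by (simp add: mult.assoc)
qed

lemma sum_extend:
  "M \<le> n \<Longrightarrow> (\<Sum>i\<le>n. real (if i \<le> M then c i else 0) * r ^ i) = (\<Sum>i\<le>M. real (c i) * r ^ i)"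
  by (rule sum.mono_neutral_cong_right) auto

lemma push_down:
  "x = (\<Sum>i\<le>M. real (c i) * r ^ i) \<Longrightarrow> x * real b ^ n \<in> \<int> \<Longrightarrow> \<exists>c'. x = (\<Sum>i\<le>n. real (c' i) * r ^ i)"
proof (induction M arbitrary: c)
  case 0
  then show ?case using sum_extend[of 0 n c] by (metis le0)
next
  case (Suc M)
  show ?case
  proof (cases "Suc M \<le> n")
    case True
    then show ?thesis using sum_extend[of "Suc M" n c] Suc.prems by metis
  next
    case False
    then have nM: "n \<le> M" by simp
    define x' where "x' = (\<Sum>i\<le>M. real (c i) * r ^ i)"
    have x: "x = x' + real (c (Suc M)) * r ^ Suc M" using Suc.prems by (simp add: x'_def)
    have bb: "real b ^ M = real b ^ n * real b ^ (M - n)" by (metis nM le_add_diff_inverse power_add)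
    have "x * real b ^ M = (x * real b ^ n) * real b ^ (M - n)" unfolding bb by (simp only: mult.assoc)
    moreover have "real b ^ (M - n) \<in> \<int>" by simp
    ultimately have xi: "x * real b ^ M \<in> \<int>" using Suc.prems(2) by (metis Ints_mult)
    have x'i: "x' * real b ^ M \<in> \<int>" unfolding x'_def by (rule crep_Ints) simp
    have "real (c (Suc M)) * r ^ Suc M * real b ^ M = x * real b ^ M - x' * real b ^ M"
      by (simp add: x algebra_simps)
    then have "real (c (Suc M) * a ^ Suc M) / real b \<in> \<int>" using xi x'i top_term by simp
    then have "b dvd c (Suc M) * a ^ Suc M" by (intro nat_dvd_of_Ints b_pos)
    moreover have "coprime b (a ^ Suc M)" using cop by (simp add: coprime_commute)
    ultimately have "b dvd c (Suc M)" by (simp add: coprime_dvd_mult_left_iff)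
    then obtain q where q: "c (Suc M) = b * q" by (auto elim: dvdE)
    have "real (c (Suc M)) * r ^ Suc M = real (q * a) * r ^ M"
      using b_pos by (simp add: q r_def)
    define c'' where "c'' i = c i + (if i = M then q * a else 0)" for i
    have tm: "real (c'' i) * r ^ i = real (c i) * r ^ i + (if i = M then real (q * a) * r ^ i else 0)" for i
      by (simp add: c''_def algebra_simps)
    have "(\<Sum>i\<le>M. real (c'' i) * r ^ i) = x' + real (q * a) * r ^ M"
      unfolding tm sum.distrib x'_def by (simp add: sum.delta)
    then have "x = (\<Sum>i\<le>M. real (c'' i) * r ^ i)"
      using x \<open>real (c (Suc M)) * r ^ Suc M = real (q * a) * r ^ M\<close> by simp
    then show ?thesis using Suc.IH Suc.prems(2) by blast
  qed
qed

end

lemma mod_complement: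
  fixes b c d :: nat
  assumes "b dvd c + d" "\<not> b dvd c"
  shows "b - c mod b \<le> d"
proof -
  have b0: "b > 0" using assms by (cases "b = 0") auto
  define \<rho> where "\<rho> = c mod b"
  define \<sigma> where "\<sigma> = d mod b"
  have r0: "\<rho> > 0" using assms(2) unfolding \<rho>_def by (simp add: dvd_eq_mod_eq_0)
  have rb: "\<rho> < b" "\<sigma> < b" unfolding \<rho>_def \<sigma>_def using b0 by auto
  have "(c + d) mod b = (\<rho> + \<sigma>) mod b" unfolding \<rho>_def \<sigma>_def by (simp add: mod_add_eq)
  then have "b dvd \<rho> + \<sigma>" using assms(1) by (simp add: dvd_eq_mod_eq_0)
  then obtain k where k: "\<rho> + \<sigma> = b * k" by (auto elim: dvdE)
  have "k = 1"
  proof (rule ccontr)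
    assume "k \<noteq> 1"
    then consider "k = 0" | "k \<ge> 2" by linarith
    then show False
    proof cases
      case 1 then show False using k r0 by simp
    next
      case 2
      then have "b * 2 \<le> b * k" by (intro mult_le_mono2)
      then show False using k rb by linarith
    qed
  qed
  then have "\<sigma> = b - \<rho>" using k by simp
  moreover have "\<sigma> \<le> d" unfolding \<sigma>_def by simp
  ultimately show ?thesis unfolding \<rho>_def by simp
qed

context srsetup
begin

definition CD :: "real set \<Rightarrow> real set" where "CD A = {u \<in> Smon. \<forall>s\<in>A. s - u \<in> Smon}"

lemma Ints_mult_bpow: "x * real b ^ n \<in> \<int> \<Longrightarrow> n \<le> n' \<Longrightarrow> x * real b ^ n' \<in> \<int>"
proof -
  assume x: "x * real b ^ n \<in> \<int>" and n: "n \<le> n'"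
  have bb: "real b ^ n' = real b ^ n * real b ^ (n' - n)" by (metis n le_add_diff_inverse power_add)
  have "x * real b ^ n' = (x * real b ^ n) * real b ^ (n' - n)" unfolding bb by (simp only: mult.assoc)
  moreover have "real b ^ (n' - n) \<in> \<int>" by simp
  ultimately show ?thesis using x by (metis Ints_mult)
qed

lemma split_top:
  assumes "x \<in> Smon" "x * real b ^ Suc m \<in> \<int>"
  shows "\<exists>x' e. x' \<in> Smon \<and> x' * real b ^ m \<in> \<int> \<and> x = x' + real e * r ^ Suc m"
proof -
  obtain M c where "x = (\<Sum>i\<le>M. real (c i) * r ^ i)" using Smon_crep[OF assms(1)] by blast
  then obtain c' where x: "x = (\<Sum>i\<le>Suc m. real (c' i) * r ^ i)" using push_down assms(2) by blast
  show ?thesis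
    by (intro exI[of _ "\<Sum>i\<le>m. real (c' i) * r ^ i"] exI[of _ "c' (Suc m)"] conjI crep_Sr crep_Ints)
       (auto simp: x)
qed

lemma top_Ints_dvd:
  assumes "y * real b ^ m \<in> \<int>" "(y + real e * r ^ Suc m) * real b ^ m \<in> \<int>"
  shows "b dvd e"
proof -
  have tt: "real e * r ^ Suc m * real b ^ m = real (e * a ^ Suc m) / real b" by (rule top_term)
  have "(y + real e * r ^ Suc m) * real b ^ m - y * real b ^ m = real e * r ^ Suc m * real b ^ m"
    by (simp add: ring_distribs)
  then have "real (e * a ^ Suc m) / real b = (y + real e * r ^ Suc m) * real b ^ m - y * real b ^ m"
    using tt by simp
  then have "real (e * a ^ Suc m) / real b \<in> \<int>" using assms by simp
  then have "b dvd e * a ^ Suc m" by (intro nat_dvd_of_Ints b_pos)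
  moreover have "coprime b (a ^ Suc m)" using cop by (simp add: coprime_commute)
  ultimately show "b dvd e" by (simp add: coprime_dvd_mult_left_iff)
qed

lemma top_Ints_of_dvd:
  assumes "y * real b ^ m \<in> \<int>" "b dvd e"
  shows "(y + real e * r ^ Suc m) * real b ^ m \<in> \<int>"
proof -
  obtain q where q: "e = b * q" using assms(2) by (auto elim: dvdE)
  have tt: "real e * r ^ Suc m * real b ^ m = real (e * a ^ Suc m) / real b" by (rule top_term)
  have "(y + real e * r ^ Suc m) * real b ^ m = y * real b ^ m + real e * r ^ Suc m * real b ^ m"
    by (simp add: ring_distribs)
  then have "(y + real e * r ^ Suc m) * real b ^ m = y * real b ^ m + real (e * a ^ Suc m) / real b"
    using tt by simp
  also have "real (e * a ^ Suc m) / real b = real (q * a ^ Suc m)" using b_pos by (simp add: q)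
  finally show ?thesis using assms(1) by simp
qed

lemma cd_step:
  assumes A: "\<forall>s\<in>A. s * real b ^ D \<in> \<int>"
  shows "u \<in> CD A \<Longrightarrow> u * real b ^ n \<in> \<int> \<Longrightarrow> \<exists>w\<in>CD A. u \<le> w \<and> w * real b ^ D \<in> \<int>"
proof (induction n arbitrary: u)
  case 0
  then show ?case using Ints_mult_bpow[of u 0 D] by auto
next
  case (Suc m)
  show ?case
  proof (cases "Suc m \<le> D")
    case True
    then show ?thesis using Ints_mult_bpow[of u "Suc m" D] Suc.prems by auto
  next
    case False
    then have Dm: "D \<le> m" by simp
    have uS: "u \<in> Smon" and uA: "\<forall>s\<in>A. s - u \<in> Smon" using Suc.prems(1) by (auto simp: CD_def)
    obtain u' c where u': "u' \<in> Smon" "u' * real b ^ m \<in> \<int>" and u: "u = u' + real c * r ^ Suc m"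
      using split_top[OF uS Suc.prems(2)] by blast
    show ?thesis
    proof (cases "b dvd c")
      case True
      then have "u * real b ^ m \<in> \<int>" using top_Ints_of_dvd[OF u'(2)] u by simp
      then show ?thesis using Suc.IH[OF Suc.prems(1)] by blast
    next
      case False
      define \<rho> where "\<rho> = c mod b"
      define w1 where "w1 = u + real (b - \<rho>) * r ^ Suc m"
      have w1S: "w1 \<in> Smon" unfolding w1_def by (intro Smon_add uS Smon_nat_mult Smon_pow)
      have w1A: "s - w1 \<in> Smon" if s: "s \<in> A" for s
      proof -
        define x where "x = s - u"
        have xS: "x \<in> Smon" using uA s by (simp add: x_def)
        have sb: "s * real b ^ Suc m \<in> \<int>" using A s Ints_mult_bpow[of s D "Suc m"] Dm by auto
        have "x * real b ^ Suc m = s * real b ^ Suc m - u * real b ^ Suc m" by (simp add: x_def algebra_simps)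
        then have "x * real b ^ Suc m \<in> \<int>" using sb Suc.prems(2) by simp
        then obtain x' d where x': "x' \<in> Smon" "x' * real b ^ m \<in> \<int>" and x: "x = x' + real d * r ^ Suc m"
          using split_top[OF xS] by blast
        have "s = (u' + x') + real (c + d) * r ^ Suc m" using u x by (simp add: x_def algebra_simps)
        moreover have "(u' + x') * real b ^ m \<in> \<int>" using u'(2) x'(2) by (simp add: algebra_simps)
        moreover have "s * real b ^ m \<in> \<int>" using A s Ints_mult_bpow[of s D m] Dm by auto
        ultimately have "b dvd c + d" using top_Ints_dvd[of "u' + x'" m "c + d"] by simp
        then have dge: "b - \<rho> \<le> d" unfolding \<rho>_def using mod_complement False by blast
        have "s - w1 = x' + real (d - (b - \<rho>)) * r ^ Suc m"
          using dge unfolding w1_def by (simp add: x_def[symmetric] x of_nat_diff algebra_simps)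
        moreover have "x' + real (d - (b - \<rho>)) * r ^ Suc m \<in> Smon"
          by (intro Smon_add x'(1) Smon_nat_mult Smon_pow)
        ultimately show ?thesis by simp
      qed
      have w1CD: "w1 \<in> CD A" using w1S w1A by (simp add: CD_def)
      have "b dvd c + (b - \<rho>)"
      proof -
        have "\<rho> < b" unfolding \<rho>_def using b_pos by simp
        moreover have cq: "c = b * (c div b) + \<rho>" unfolding \<rho>_def by simp
        ultimately have "c + (b - \<rho>) = b * (c div b) + b" by linarith
        then have "c + (b - \<rho>) = b * (c div b + 1)" by simp
        then show ?thesis by simp
      qed
      then have "(u' + real (c + (b - \<rho>)) * r ^ Suc m) * real b ^ m \<in> \<int>"
        by (rule top_Ints_of_dvd[OF u'(2)])
      moreover have "w1 = u' + real (c + (b - \<rho>)) * r ^ Suc m"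
        unfolding w1_def u by (simp add: algebra_simps)
      ultimately have "w1 * real b ^ m \<in> \<int>" by simp
      then obtain w where w: "w \<in> CD A" "w1 \<le> w" "w * real b ^ D \<in> \<int>"
        using Suc.IH[OF w1CD] by blast
      have "u \<le> w1" unfolding w1_def using r_pos by simp
      then have "u \<le> w" using w(2) by linarith
      then show ?thesis using w(1,3) by blast
    qed
  qed
qed

lemma cd_max:
  assumes "finite A" "A \<noteq> {}" "A \<subseteq> Smon"
  shows "\<exists>t\<in>CD A. \<forall>u\<in>CD A. u \<le> t"
proof -
  have "\<forall>s\<in>A. \<exists>n. s * real b ^ n \<in> \<int>" using assms(3) Smon_Ints by blast
  then obtain nf where nf: "\<And>s. s \<in> A \<Longrightarrow> s * real b ^ nf s \<in> \<int>" by metis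
  define D where "D = Max (nf ` A)"
  have AD: "\<forall>s\<in>A. s * real b ^ D \<in> \<int>"
    using nf assms(1) Ints_mult_bpow unfolding D_def by (meson Max_ge finite_imageI imageI)
  obtain s0 where s0: "s0 \<in> A" using assms(2) by blast
  define F where "F = {w \<in> CD A. w * real b ^ D \<in> \<int>}"
  define J where "J = nat \<lceil>s0 * real b ^ D\<rceil>"
  have "F \<subseteq> (\<lambda>j. real j / real b ^ D) ` {..J}"
  proof
    fix w assume w: "w \<in> F"
    then obtain z where z: "w * real b ^ D = of_int z" unfolding F_def by (auto elim: Ints_cases)
    have wS: "w \<in> Smon" and "s0 - w \<in> Smon" using w s0 unfolding F_def CD_def by auto
    then have w0: "0 \<le> w" and ws: "w \<le> s0" using Smon_nonneg by force+
    have bpos: "real b ^ D > 0" using b_pos by simp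
    have "0 \<le> w * real b ^ D" using w0 bpos by simp
    then have "0 \<le> (of_int z :: real)" using z by simp
    then have z0: "z \<ge> 0" by simp
    have "of_int z \<le> s0 * real b ^ D" using ws bpos z by (metis mult_right_mono less_imp_le)
    then have "nat z \<le> J" unfolding J_def by linarith
    moreover have "w = real (nat z) / real b ^ D" using z z0 bpos by (simp add: field_simps)
    ultimately show "w \<in> (\<lambda>j. real j / real b ^ D) ` {..J}" by auto
  qed
  then have finF: "finite F" by (rule finite_subset) auto
  have "0 \<in> F" using assms(3) Smon_zero unfolding F_def CD_def by auto
  then have Fne: "F \<noteq> {}" by auto
  define t where "t = Max F"
  have tF: "t \<in> F" unfolding t_def using finF Fne by simp
  have "\<forall>u\<in>CD A. u \<le> t"
  proof
    fix u assume u: "u \<in> CD A"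
    then obtain n where "u * real b ^ n \<in> \<int>" using Smon_Ints by (auto simp: CD_def)
    then obtain w where "w \<in> CD A" "u \<le> w" "w * real b ^ D \<in> \<int>" using cd_step[OF AD u] by blast
    then have "w \<in> F" "u \<le> w" unfolding F_def by auto
    then show "u \<le> t" unfolding t_def using finF by (meson Max_ge order_trans)
  qed
  then show ?thesis using tF unfolding F_def by auto
qed

lemma Smon_list: "x \<in> Smon \<Longrightarrow> \<exists>ks. x = (\<Sum>k\<leftarrow>ks. r ^ k)"
  unfolding Smon_def
proof (induction rule: add_submonoid_gen.induct)
  case zero then show ?case by (intro exI[of _ "[]"]) simp
next
  case (gen x) then show ?case by (auto intro: exI[of _ "[n]" for n])
next
  case (add x y)
  then obtain ks1 ks2 where "x = (\<Sum>k\<leftarrow>ks1. r ^ k)" "y = (\<Sum>k\<leftarrow>ks2. r ^ k)" by blast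
  then show ?case by (intro exI[of _ "ks1 @ ks2"]) simp
qed

lemma exp_sum_list: "exp (\<Sum>k\<leftarrow>ks. r ^ k) = prod_list (map (\<lambda>k. exp (r ^ k)) ks)"
  by (induction ks) (auto simp: exp_add)

lemma rpow_atom:
  assumes v: "v \<in> Smon" and w: "w \<in> Smon" and eq: "r ^ n = v + w"
  shows "v = 0 \<or> w = 0"
proof (rule ccontr)
  assume "\<not> (v = 0 \<or> w = 0)"
  then have v0: "v > 0" and w0: "w > 0" using Smon_nonneg v w by force+
  obtain ks1 where ks1: "v = (\<Sum>k\<leftarrow>ks1. r ^ k)" using Smon_list v by blast
  obtain ks2 where ks2: "w = (\<Sum>k\<leftarrow>ks2. r ^ k)" using Smon_list w by blast
  define ks where "ks = ks1 @ ks2"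
  have ne: "ks1 \<noteq> []" using v0 ks1 by auto
  have gt: "n < k" if "k \<in> set ks" for k
  proof -
    have nn: "\<And>k. 0 \<le> r ^ k" using r_pos by simp
    have "r ^ k < r ^ n"
    proof (cases "k \<in> set ks1")
      case True
      then have "r ^ k \<le> v" unfolding ks1 using member_le_sum_list[of "r ^ k" "map (\<lambda>k. r ^ k) ks1"] nn
        by auto
      then show ?thesis using eq w0 by linarith
    next
      case False
      then have "k \<in> set ks2" using that ks_def by auto
      then have "r ^ k \<le> w" unfolding ks2 using member_le_sum_list[of "r ^ k" "map (\<lambda>k. r ^ k) ks2"] nn
        by auto
      then show ?thesis using eq v0 by linarith
    qed
    then show ?thesis using r_pos r_lt1 by simp
  qed
  have sum_ks: "r ^ n = (\<Sum>k\<leftarrow>ks. r ^ k)" using eq ks1 ks2 ks_def by simp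
  also have "(\<Sum>k\<leftarrow>ks. r ^ k) = (\<Sum>k\<leftarrow>ks. r ^ n * r ^ (k - n))"
  proof (intro arg_cong[where f = sum_list] map_cong refl)
    fix k assume "k \<in> set ks"
    then have "n < k" by (rule gt)
    then have "k = n + (k - n)" by simp
    then show "r ^ k = r ^ n * r ^ (k - n)" by (metis power_add)
  qed
  also have "\<dots> = r ^ n * (\<Sum>k\<leftarrow>ks. r ^ (k - n))" by (simp add: sum_list_const_mult)
  finally have one: "(\<Sum>k\<leftarrow>ks. r ^ (k - n)) = 1" using r_pos by simp
  define K where "K = sum_list ks"
  have kK: "k - n \<le> K" if "k \<in> set ks" for k
    using member_le_sum_list[OF that] unfolding K_def by simp
  have "real (b ^ K) / real a = (\<Sum>k\<leftarrow>ks. r ^ (k - n)) * real b ^ K / real a"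
    using one by simp
  also have "\<dots> = (\<Sum>k\<leftarrow>ks. r ^ (k - n)) * (real b ^ K / real a)" by simp
  also have "\<dots> = (\<Sum>k\<leftarrow>ks. r ^ (k - n) * (real b ^ K / real a))"
    by (rule sum_list_mult_const[symmetric])
  also have "\<dots> = (\<Sum>k\<leftarrow>ks. real (a ^ (k - n - 1) * b ^ (K - (k - n))))"
  proof (intro arg_cong[where f = sum_list] map_cong refl)
    fix k assume k: "k \<in> set ks"
    have "r ^ (k - n) * real b ^ K = real (a ^ (k - n) * b ^ (K - (k - n)))"
      by (rule rpow_mult_b) (use kK k in auto)
    moreover have "a ^ (k - n) = a * a ^ (k - n - 1)" using gt[OF k]
      by (metis Suc_diff_Suc diff_Suc_1 diff_diff_left power_Suc zero_less_diff)
    ultimately show "r ^ (k - n) * (real b ^ K / real a) = real (a ^ (k - n - 1) * b ^ (K - (k - n)))"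
      using a2 by simp
  qed
  finally have "real (b ^ K) / real a \<in> \<int>" by (simp add: sum_list_Ints)
  then have "a dvd b ^ K" using a2 by (intro nat_dvd_of_Ints) auto
  moreover have "coprime a (b ^ K)" using cop by simp
  ultimately have "a dvd 1" by (metis coprime_dvd_mult_left_iff nat_mult_1)
  then show False using a2 by simp
qed

end

context srsetup
begin

definition E where "E = add_submonoid_gen (exp ` Smon)"
definition esum :: "real multiset \<Rightarrow> real" where "esum M = (\<Sum>s\<in>#M. exp s)"
definition rep :: "real multiset \<Rightarrow> real \<Rightarrow> bool" where
  "rep M x \<longleftrightarrow> set_mset M \<subseteq> Smon \<and> x = esum M"

lemma esum_empty [simp]: "esum {#} = 0" by (simp add: esum_def)
lemma esum_add_mset [simp]: "esum (add_mset s M) = exp s + esum M" by (simp add: esum_def)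
lemma esum_plus [simp]: "esum (M + M') = esum M + esum M'" by (simp add: esum_def)

lemma esum_nonneg: "esum M \<ge> 0"
  by (induction M) (auto intro: add_nonneg_nonneg)

lemma esum_ge1: "M \<noteq> {#} \<Longrightarrow> set_mset M \<subseteq> Smon \<Longrightarrow> esum M \<ge> 1"
proof -
  assume "M \<noteq> {#}" "set_mset M \<subseteq> Smon"
  then obtain s M' where M: "M = add_mset s M'" and s: "s \<in> Smon" by (metis insert_subset multiset_cases set_mset_add_mset_insert)
  have "exp s \<ge> 1" using Smon_nonneg[OF s] by simp
  then have "exp s + esum M' \<ge> 1" using esum_nonneg[of M'] by linarith
  then show ?thesis by (simp add: M)
qed

lemma esum_in_E: "set_mset M \<subseteq> Smon \<Longrightarrow> esum M \<in> E"
proof (induction M)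
  case empty then show ?case by (simp add: E_def add_submonoid_gen.zero)
next
  case (add s M)
  then have "exp s \<in> E" "esum M \<in> E" by (auto simp: E_def intro: add_submonoid_gen.gen)
  then show ?case by (simp add: E_def add_submonoid_gen.add)
qed

lemma E_rep: "x \<in> E \<Longrightarrow> \<exists>M. rep M x"
  unfolding E_def rep_def
proof (induction rule: add_submonoid_gen.induct)
  case zero then show ?case by (intro exI[of _ "{#}"]) simp
next
  case (gen x)
  then obtain s where "s \<in> Smon" "x = exp s" by auto
  then show ?case by (intro exI[of _ "{#s#}"]) simp
next
  case (add x y)
  then obtain M1 M2 where "set_mset M1 \<subseteq> Smon" "x = esum M1" "set_mset M2 \<subseteq> Smon" "y = esum M2" by blast
  then show ?case by (intro exI[of _ "M1 + M2"]) auto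
qed

lemma esum_grid:
  assumes "N > 0" "set_mset M \<subseteq> (\<lambda>j. real j / real N) ` {..m}"
  shows "esum M = (\<Sum>j\<le>m. real (count M (real j / real N)) * exp (real j / real N))"
  using assms(2)
proof (induction M)
  case empty then show ?case by simp
next
  case (add x M)
  then obtain j0 where j0: "j0 \<le> m" "x = real j0 / real N" by auto
  have IH: "esum M = (\<Sum>j\<le>m. real (count M (real j / real N)) * exp (real j / real N))"
    using add by auto
  have eqv: "(x = real j / real N) \<longleftrightarrow> j = j0" for j
    unfolding j0(2) using assms(1) by (auto simp: divide_cancel_right)
  have "(\<Sum>j\<le>m. real (count (add_mset x M) (real j / real N)) * exp (real j / real N)) =
        (\<Sum>j\<le>m. real (count M (real j / real N)) * exp (real j / real N) + (if j = j0 then exp (real j / real N) else 0))"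
    by (intro sum.cong refl) (auto simp: eqv algebra_simps)
  also have "\<dots> = esum M + exp x" using j0 by (simp add: sum.distrib IH)
  finally show ?case by simp
qed

lemma rep_unique:
  assumes "rep M x" "rep M' x"
  shows "M = M'"
proof -
  have MS: "set_mset M \<subseteq> Smon" and M'S: "set_mset M' \<subseteq> Smon" and eq: "esum M = esum M'"
    using assms by (auto simp: rep_def)
  define A where "A = set_mset M \<union> set_mset M'"
  have finA: "finite A" and AS: "A \<subseteq> Smon" using MS M'S by (auto simp: A_def)
  have "\<forall>s\<in>A. \<exists>n. s * real b ^ n \<in> \<int>" using AS Smon_Ints by blast
  then obtain nf where nf: "\<And>s. s \<in> A \<Longrightarrow> s * real b ^ nf s \<in> \<int>" by metis
  define D where "D = Max (insert 0 (nf ` A))"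
  define N where "N = b ^ D"
  have N0: "N > 0" using b_pos by (simp add: N_def)
  have AD: "s * real N \<in> \<int>" if "s \<in> A" for s
    using nf[OF that] Ints_mult_bpow[of s "nf s" D] finA that unfolding D_def N_def by simp
  define jf where "jf s = nat \<lfloor>s * real N\<rfloor>" for s
  define m where "m = Max (insert 0 (jf ` A))"
  have grid: "A \<subseteq> (\<lambda>j. real j / real N) ` {..m}"
  proof
    fix s assume s: "s \<in> A"
    obtain z where z: "s * real N = of_int z" using AD[OF s] by (auto elim: Ints_cases)
    have "s \<ge> 0" using s AS Smon_nonneg by auto
    then have z0: "z \<ge> 0" using z N0 by (metis mult_nonneg_nonneg of_int_0_le_iff of_nat_0_le_iff)
    have "jf s = nat z" unfolding jf_def z by simp
    moreover have "jf s \<le> m" unfolding m_def using finA s by simp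
    moreover have "s = real (nat z) / real N" using z z0 N0 by (simp add: field_simps)
    ultimately show "s \<in> (\<lambda>j. real j / real N) ` {..m}" by auto
  qed
  define c where "c j = int (count M (real j / real N)) - int (count M' (real j / real N))" for j
  have "(\<Sum>j\<le>m. of_int (c j) * exp (real j / real N)) = esum M - esum M'"
    using esum_grid[OF N0, of M m] esum_grid[OF N0, of M' m] grid
    by (simp add: c_def A_def algebra_simps sum_subtractf)
  then have "\<forall>j\<le>m. c j = 0" using exp_lin_indep[OF N0] eq by simp
  show "M = M'"
  proof (rule multiset_eqI)
    fix y
    show "count M y = count M' y"
    proof (cases "y \<in> A")
      case True
      then obtain j where j: "j \<le> m" "y = real j / real N" using grid by auto
      then show ?thesis using \<open>\<forall>j\<le>m. c j = 0\<close> by (simp add: c_def)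
    next
      case False
      then show ?thesis by (simp add: A_def not_in_iff)
    qed
  qed
qed

definition mprod :: "real multiset \<Rightarrow> real multiset \<Rightarrow> real multiset" where
  "mprod M1 M2 = (\<Sum>s\<in>#M1. image_mset ((+) s) M2)"

lemma mprod_add_mset [simp]: "mprod (add_mset s M1) M2 = image_mset ((+) s) M2 + mprod M1 M2"
  by (simp add: mprod_def)
lemma mprod_empty [simp]: "mprod {#} M2 = {#}" by (simp add: mprod_def)

lemma esum_shift: "esum (image_mset ((+) s) M) = exp s * esum M"
  by (induction M) (auto simp: exp_add algebra_simps)

lemma esum_mprod: "esum (mprod M1 M2) = esum M1 * esum M2"
  by (induction M1) (auto simp: esum_shift algebra_simps)

lemma size_mprod: "size (mprod M1 M2) = size M1 * size M2"
  by (induction M1) auto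

lemma set_mprod: "set_mset M1 \<subseteq> Smon \<Longrightarrow> set_mset M2 \<subseteq> Smon \<Longrightarrow> set_mset (mprod M1 M2) \<subseteq> Smon"
  by (induction M1) (auto intro: Smon_add)

lemma rep_mult: "rep M1 x \<Longrightarrow> rep M2 y \<Longrightarrow> rep (mprod M1 M2) (x * y)"
  by (auto simp: rep_def esum_mprod set_mprod)

lemma E_mult: "x \<in> E \<Longrightarrow> y \<in> E \<Longrightarrow> x * y \<in> E"
  by (metis E_rep esum_in_E rep_def rep_mult)

lemma E_add: "x \<in> E \<Longrightarrow> y \<in> E \<Longrightarrow> x + y \<in> E"
  unfolding E_def by (rule add_submonoid_gen.add)

lemma E_exp: "s \<in> Smon \<Longrightarrow> exp s \<in> E"
  unfolding E_def by (rule add_submonoid_gen.gen) auto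

lemma E_one: "1 \<in> E" using E_exp[OF Smon_zero] by simp

lemma E_ge1: "x \<in> E \<Longrightarrow> x \<noteq> 0 \<Longrightarrow> 1 \<le> x"
  by (metis E_rep esum_empty esum_ge1 rep_def)

lemma E_nonneg: "x \<in> E \<Longrightarrow> 0 \<le> x"
  by (metis E_rep esum_nonneg rep_def)

lemma unit_iff: "sr_unit E u \<longleftrightarrow> u = 1"
proof
  assume "sr_unit E u"
  then obtain v where u: "u \<in> E" "u \<noteq> 0" and v: "v \<in> E" "v \<noteq> 0" and uv: "u * v = 1"
    unfolding sr_unit_def by auto
  have "1 \<le> u" "1 \<le> v" using E_ge1 u v by auto
  then show "u = 1" using uv by (metis antisym mult_le_cancel_left1 le_less_trans less_le not_le mult.commute mult_le_one)
next
  assume "u = 1" then show "sr_unit E u" unfolding sr_unit_def using E_one by force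
qed

lemma rep_size1: "rep M x \<Longrightarrow> size M = 1 \<Longrightarrow> \<exists>s\<in>Smon. M = {#s#} \<and> x = exp s"
proof -
  assume "rep M x" "size M = 1"
  then obtain s where "M = {#s#}" using size_1_singleton_mset by blast
  then show ?thesis using \<open>rep M x\<close> by (auto simp: rep_def)
qed

lemma rep_one: "rep {#0#} 1" by (simp add: rep_def Smon_zero)

lemma exp_atom: "sr_atom E (exp (r ^ n))"
  unfolding sr_atom_def
proof (intro conjI ballI impI)
  show "exp (r ^ n) \<in> E - {0}" using E_exp[OF Smon_pow] by simp
  show "\<not> sr_unit E (exp (r ^ n))" using r_pos by (simp add: unit_iff)
  fix y z assume y: "y \<in> E - {0}" and z: "z \<in> E - {0}" and eq: "exp (r ^ n) = y * z"
  obtain My where My: "rep My y" using E_rep y by blast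
  obtain Mz where Mz: "rep Mz z" using E_rep z by blast
  have "rep {#r ^ n#} (exp (r ^ n))" by (simp add: rep_def Smon_pow)
  moreover have "rep (mprod My Mz) (exp (r ^ n))" using rep_mult[OF My Mz] eq by simp
  ultimately have mp: "mprod My Mz = {#r ^ n#}" by (metis rep_unique)
  then have "size My * size Mz = 1" by (metis size_mprod size_single)
  then have "size My = 1" "size Mz = 1" by auto
  then obtain v w where v: "v \<in> Smon" "My = {#v#}" "y = exp v" and w: "w \<in> Smon" "Mz = {#w#}" "z = exp w"
    using rep_size1 My Mz by blast
  have "mprod My Mz = {#v + w#}" using v w by simp
  then have "r ^ n = v + w" using mp by simp
  then have "v = 0 \<or> w = 0" using rpow_atom v w by blast
  then show "sr_unit E y \<or> sr_unit E z" using v w by (auto simp: unit_iff)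
qed

lemma exp_atoms:
  assumes "s \<in> Smon" "s \<noteq> 0"
  shows "\<exists>as. as \<noteq> [] \<and> (\<forall>a\<in>set as. sr_atom E a) \<and> exp s = prod_list as"
proof -
  obtain ks where ks: "s = (\<Sum>k\<leftarrow>ks. r ^ k)" using Smon_list assms(1) by blast
  have "ks \<noteq> []" using ks assms(2) by auto
  then show ?thesis
    by (intro exI[of _ "map (\<lambda>k. exp (r ^ k)) ks"]) (auto simp: ks exp_sum_list exp_atom)
qed

lemma esum_unshift: "esum (image_mset (\<lambda>s. s - t) M) * exp t = esum M"
  by (induction M) (auto simp: algebra_simps simp flip: exp_add)

end

context srsetup
begin

lemma atomic_aux:
  "\<forall>x M. rep M x \<longrightarrow> size M = k \<longrightarrow> x \<noteq> 1 \<longrightarrow> x \<noteq> 0 \<longrightarrow>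
     (\<exists>as. as \<noteq> [] \<and> (\<forall>a\<in>set as. sr_atom E a) \<and> x = prod_list as)"
proof (induction k rule: less_induct)
  case (less k)
  show ?case
  proof (intro allI impI)
    fix x M assume xM: "rep M x" and sz: "size M = k" and x1: "x \<noteq> 1" and x0: "x \<noteq> 0"
    have MS: "set_mset M \<subseteq> Smon" and xe: "x = esum M" using xM by (auto simp: rep_def)
    have k0: "k \<noteq> 0" using sz x0 xe by (cases "M = {#}") (auto simp: nonempty_has_size)
    show "\<exists>as. as \<noteq> [] \<and> (\<forall>a\<in>set as. sr_atom E a) \<and> x = prod_list as"
    proof (cases "k = 1")
      case True
      then obtain s where s: "s \<in> Smon" "x = exp s" using rep_size1 xM sz by blast
      then have "s \<noteq> 0" using x1 by auto
      then show ?thesis using exp_atoms s by blast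
    next
      case False
      with k0 have k2: "k \<ge> 2" by simp
      define A where "A = set_mset M"
      have A: "finite A" "A \<noteq> {}" "A \<subseteq> Smon" using MS k0 sz by (auto simp: A_def)
      obtain t where tCD: "t \<in> CD A" and tmax: "\<forall>u\<in>CD A. u \<le> t" using cd_max[OF A] by blast
      have tS: "t \<in> Smon" and tA: "\<forall>s\<in>A. s - t \<in> Smon" using tCD by (auto simp: CD_def)
      define Mh where "Mh = image_mset (\<lambda>s. s - t) M"
      define h where "h = esum Mh"
      have hrep: "rep Mh h" using tA by (auto simp: rep_def Mh_def h_def A_def)
      have szh: "size Mh = k" using sz by (simp add: Mh_def)
      have xh: "x = exp t * h" using esum_unshift[of t M] xe by (simp add: Mh_def h_def mult.commute)
      have hE: "h \<in> E" using hrep esum_in_E by (simp add: rep_def)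
      have "Mh \<noteq> {#}" using szh k0 by auto
      then have "h \<ge> 1" using esum_ge1 hrep by (simp add: rep_def)
      then have h0: "h \<noteq> 0" by simp
      have h1: "h \<noteq> 1"
      proof
        assume "h = 1"
        then have "Mh = {#0#}" using hrep rep_one rep_unique by blast
        then show False using szh k2 by simp
      qed
      have noexp: "y = 1" if y: "y \<in> E" and z: "z \<in> E" and hyz: "h = y * z" and My: "rep My y"
          and sy: "size My = 1" for y z My
      proof -
        obtain v where v: "v \<in> Smon" "My = {#v#}" "y = exp v" using rep_size1 My sy by blast
        obtain Mz where Mz: "rep Mz z" using E_rep z by blast
        have "rep (mprod My Mz) h" using rep_mult[OF My Mz] hyz by simp
        then have Mh_eq: "Mh = image_mset ((+) v) Mz" using rep_unique hrep v by simp
        have "t + v \<in> CD A"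
          unfolding CD_def
        proof (intro CollectI conjI ballI)
          show "t + v \<in> Smon" using tS v by (simp add: Smon_add)
          fix s assume s: "s \<in> A"
          then have "s - t \<in># Mh" by (simp add: Mh_def A_def)
          then obtain w where w: "w \<in># Mz" "s - t = v + w" using Mh_eq by auto
          then have "w \<in> Smon" using Mz by (auto simp: rep_def)
          moreover have "s - (t + v) = w" using w by simp
          ultimately show "s - (t + v) \<in> Smon" by simp
        qed
        then have "t + v \<le> t" using tmax by blast
        then have "v = 0" using Smon_nonneg[OF v(1)] by simp
        then show "y = 1" using v by simp
      qed
      have hfac: "\<exists>as. as \<noteq> [] \<and> (\<forall>a\<in>set as. sr_atom E a) \<and> h = prod_list as"
      proof (cases "sr_atom E h")
        case True then show ?thesis by (intro exI[of _ "[h]"]) auto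
      next
        case False
        have hnu: "\<not> sr_unit E h" using h1 by (simp add: unit_iff)
        from False hE h0 hnu obtain y z where y: "y \<in> E - {0}" and z: "z \<in> E - {0}" and hyz: "h = y * z"
          and yu: "\<not> sr_unit E y" and zu: "\<not> sr_unit E z"
          unfolding sr_atom_def by blast
        have y1: "y \<noteq> 1" and z1: "z \<noteq> 1" using yu zu by (auto simp: unit_iff)
        obtain My where My: "rep My y" using E_rep y by blast
        obtain Mz where Mz: "rep Mz z" using E_rep z by blast
        have "rep (mprod My Mz) h" using rep_mult[OF My Mz] hyz by simp
        then have "Mh = mprod My Mz" using rep_unique hrep by blast
        then have kyz: "k = size My * size Mz" using szh size_mprod by simp
        have "size My \<noteq> 1" using noexp[of y z My] y z hyz My y1 by auto
        moreover have "size Mz \<noteq> 1" using noexp[of z y Mz] y z hyz Mz z1 by (auto simp: mult.commute)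
        moreover have "size My \<noteq> 0"
        proof
          assume "size My = 0" then have "My = {#}" by simp
          then show False using My y by (auto simp: rep_def)
        qed
        moreover have "size Mz \<noteq> 0"
        proof
          assume "size Mz = 0" then have "Mz = {#}" by simp
          then show False using Mz z by (auto simp: rep_def)
        qed
        ultimately have sy: "size My \<ge> 2" "size Mz \<ge> 2" by (auto simp: nonempty_has_size)
        have "size My < k"
        proof -
          have "size My * 1 < size My * size Mz" using sy by (intro mult_strict_left_mono) auto
          then show ?thesis using kyz by simp
        qed
        moreover have "size Mz < k"
        proof -
          have "1 * size Mz < size My * size Mz" using sy by (intro mult_strict_right_mono) auto
          then show ?thesis using kyz by simp
        qed
        ultimately have lt: "size My < k" "size Mz < k" by auto
        have IHy: "\<forall>x M. rep M x \<longrightarrow> size M = size My \<longrightarrow> x \<noteq> 1 \<longrightarrow> x \<noteq> 0 \<longrightarrow>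
            (\<exists>as. as \<noteq> [] \<and> (\<forall>a\<in>set as. sr_atom E a) \<and> x = prod_list as)"
          by (rule less.IH) (use lt in simp)
        have IHz: "\<forall>x M. rep M x \<longrightarrow> size M = size Mz \<longrightarrow> x \<noteq> 1 \<longrightarrow> x \<noteq> 0 \<longrightarrow>
            (\<exists>as. as \<noteq> [] \<and> (\<forall>a\<in>set as. sr_atom E a) \<and> x = prod_list as)"
          by (rule less.IH) (use lt in simp)
        have y0: "y \<noteq> 0" and z0: "z \<noteq> 0" using y z by auto
        obtain as1 where
          as1: "as1 \<noteq> []" "\<forall>a\<in>set as1. sr_atom E a" "y = prod_list as1"
          using IHy[rule_format, OF My refl y1 y0] by blast
        obtain as2 where
          as2: "as2 \<noteq> []" "\<forall>a\<in>set as2. sr_atom E a" "z = prod_list as2"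
          using IHz[rule_format, OF Mz refl z1 z0] by blast
        show ?thesis using as1 as2 hyz by (intro exI[of _ "as1 @ as2"]) auto
      qed
      then obtain ash where ash: "ash \<noteq> []" "\<forall>a\<in>set ash. sr_atom E a" "h = prod_list ash" by blast
      show ?thesis
      proof (cases "t = 0")
        case True then show ?thesis using xh ash by auto
      next
        case False
        then obtain ast where ast: "ast \<noteq> []" "\<forall>a\<in>set ast. sr_atom E a" "exp t = prod_list ast"
          using exp_atoms tS by blast
        show ?thesis using xh ash ast by (intro exI[of _ "ast @ ash"]) auto
      qed
    qed
  qed
qed

lemma E_atomic: "sr_atomic E"
  unfolding sr_atomic_def
proof (intro ballI impI)
  fix x assume x: "x \<in> E - {0}" and nu: "\<not> sr_unit E x"
  obtain M where "rep M x" using E_rep x by blast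
  then show "\<exists>as. as \<noteq> [] \<and> (\<forall>a\<in>set as. sr_atom E a) \<and> x = prod_list as"
    using atomic_aux[of "size M"] x nu by (auto simp: unit_iff)
qed

lemma E_positive: "positive_semiring E"
  unfolding positive_semiring_def
  using E_nonneg E_one E_add E_mult by (auto simp: E_def add_submonoid_gen.zero)

lemma E_not_ACCP: "\<not> sr_ACCP E"
proof
  assume acc: "sr_ACCP E"
  define bb where "bb n = exp (real a * r ^ n)" for n
  have bbE: "bb n \<in> E - {0}" for n
    unfolding bb_def using E_exp[OF Smon_nat_mult[OF Smon_pow]] by simp
  have key: "real a * r ^ n = real a * r ^ Suc n + real (b - a) * r ^ Suc n" for n
  proof -
    have "real a * r ^ Suc n + real (b - a) * r ^ Suc n = real b * r * r ^ n"
      using ab by (simp add: of_nat_diff algebra_simps)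
    also have "real b * r = real a" using b_pos by (simp add: r_def)
    finally show ?thesis by simp
  qed
  have incl: "sr_principal E (bb n) \<subseteq> sr_principal E (bb (Suc n))" for n
  proof
    fix y assume "y \<in> sr_principal E (bb n)"
    then obtain s where s: "s \<in> E - {0}" "y = bb n * s" by (auto simp: sr_principal_def)
    define s' where "s' = exp (real (b - a) * r ^ Suc n) * s"
    have "exp (real (b - a) * r ^ Suc n) \<in> E" by (rule E_exp[OF Smon_nat_mult[OF Smon_pow]])
    then have "s' \<in> E" unfolding s'_def using s E_mult by auto
    moreover have "s' \<noteq> 0" unfolding s'_def using s by auto
    ultimately have "s' \<in> E - {0}" by simp
    moreover have "y = bb (Suc n) * s'"
    proof -
      have "bb n = exp (real a * r ^ Suc n + real (b - a) * r ^ Suc n)"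
        unfolding bb_def using key[of n] by simp
      also have "\<dots> = bb (Suc n) * exp (real (b - a) * r ^ Suc n)"
        unfolding bb_def by (rule exp_add)
      finally show ?thesis unfolding s(2) s'_def by (simp only: mult.assoc)
    qed
    ultimately show "y \<in> sr_principal E (bb (Suc n))" by (auto simp: sr_principal_def)
  qed
  have "(\<forall>n. bb n \<in> E - {0}) \<longrightarrow> (\<forall>n. sr_principal E (bb n) \<subseteq> sr_principal E (bb (Suc n))) \<longrightarrow>
     (\<exists>N. \<forall>n\<ge>N. sr_principal E (bb n) = sr_principal E (bb N))"
    using acc unfolding sr_ACCP_def by (rule spec)
  then obtain N where N: "\<forall>n\<ge>N. sr_principal E (bb n) = sr_principal E (bb N)"
    using bbE incl by blast
  have "bb (Suc N) \<in> sr_principal E (bb (Suc N))"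
    unfolding sr_principal_def using E_one by (auto intro!: exI[of _ 1])
  then have "bb (Suc N) \<in> sr_principal E (bb N)" using N[rule_format, of "Suc N"] by simp
  then obtain s where s: "s \<in> E - {0}" "bb (Suc N) = bb N * s" by (auto simp: sr_principal_def)
  have "1 \<le> s" using s E_ge1 by auto
  then have "bb N * 1 \<le> bb N * s" by (intro mult_left_mono) (auto simp: bb_def)
  then have "bb N \<le> bb (Suc N)" using s(2) by simp
  moreover have "bb (Suc N) < bb N"
  proof -
    have "r ^ Suc N < r ^ N" using power_strict_decreasing[of N "Suc N" r] r_pos r_lt1 by simp
    then have "real a * r ^ Suc N < real a * r ^ N" using a2 by (intro mult_strict_left_mono) auto
    then show ?thesis unfolding bb_def by (rule exp_less_mono)
  qed
  ultimately show False by linarith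
qed

end

theorem mainTheorem3:
  fixes q :: rat
  assumes "0 < q" and "q < 1" and "fst (quotient_of q) \<ge> 2"
  defines "Sr \<equiv> add_submonoid_gen (range (\<lambda>n::nat. (of_rat q :: real) ^ n))"
  shows "positive_semiring (add_submonoid_gen (exp ` Sr))
    \<and> sr_atomic (add_submonoid_gen (exp ` Sr))
    \<and> \<not> sr_ACCP (add_submonoid_gen (exp ` Sr))"
proof -
  obtain n d where nd: "quotient_of q = (n, d)" by (cases "quotient_of q") auto
  have d0: "d > 0" using quotient_of_denom_pos[OF nd] .
  have cnd: "coprime n d" using quotient_of_coprime[OF nd] .
  have qnd: "q = of_int n / of_int d" using quotient_of_div[OF nd] .
  have n2: "n \<ge> 2" using assms(3) nd by simp
  have "of_int n / of_int d < (1::rat)" using assms(2) qnd by simp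
  then have ndl: "n < d" using d0 by (simp add: divide_less_eq)
  define a where "a = nat n"
  define b where "b = nat d"
  have ia: "int a = n" and ib: "int b = d" using n2 d0 by (auto simp: a_def b_def)
  have cab: "coprime a b" using cnd by (simp flip: ia ib)
  have loc: "srsetup a b"
    unfolding srsetup_def using n2 ndl cab ia ib by linarith
  interpret S: srsetup a b by (rule loc)
  have "real a = of_int n" "real b = of_int d" using ia ib by (metis of_int_of_nat_eq)+
  then have req: "(of_rat q :: real) = S.r"
    unfolding S.r_def qnd by (simp add: of_rat_divide)
  have "Sr = S.Smon" unfolding Sr_def S.Smon_def req ..
  then have "add_submonoid_gen (exp ` Sr) = S.E" unfolding S.E_def by simp
  then show ?thesis using S.E_positive S.E_atomic S.E_not_ACCP by simp
qed

end
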